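(* Let $A=[a_{ij}]\in\mathcal{M}_n(\mathbb{H})$ be an upper triangular nilpotent matrix whose graph $\mathcal{G}_A$ is a tree. Then $W(A)$ is the closed disk centered at the origin $$W(A)=\mathbb{D}_{\mathbb{H}}\Big(0,\ \max_{\beta\in\mathbb{S}^+_{\mathbb{R}^n}}\sum_{i,j=1}^n\beta_i\beta_j|a_{ij}|\Big).$$
   Context: $\mathbb{H}$ denotes the real quaternions, $|q|^2=qq^*$. For $\mathbf{x}\in\mathbb{H}^n$, $\mathbf{x}^*$ is the conjugate transpose and $\mathbb{S}_{\mathbb{H}^n}=\{\mathbf{x}:\mathbf{x}^*\mathbf{x}=1\}$; the numerical range is $W(A)=\{\mathbf{x}^*A\mathbf{x}:\mathbf{x}\in\mathbb{S}_{\mathbb{H}^n}\}$. $\mathbb{D}_{\mathbb{H}}(c,r)=\{q\in\mathbb{H}:|q-c|\le r\}$. $\mathbb{S}^+_{\mathbb{R}^n}=\{\beta\in\mathbb{R}^n:\|\beta\|=1,\ \beta_i\ge0\ \forall i\}$. The graph $\mathcal{G}_A$ of $A=[a_{ij}]$ is the undirected graph on $\{1,\dots,n\}$ with an edge between $i$ and $j$ (a loop if $i=j$) whenever $a_{ij}\ne0$ or $a_{ji}\ne0$; loops count as cycles; $A$ is a tree if $\mathcal{G}_A$ is connected and has no cycles. *)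

theory Defs
  imports "HOL-Analysis.Analysis"
begin

datatype quat = Quat (Re: real) (Im1: real) (Im2: real) (Im3: real)

lemma quat_eqI: "Re a = Re b \<Longrightarrow> Im1 a = Im1 b \<Longrightarrow> Im2 a = Im2 b \<Longrightarrow> Im3 a = Im3 b \<Longrightarrow> a = b"
  by (cases a; cases b) auto

instantiation quat :: ring_1
begin
definition "0 = Quat 0 0 0 0"
definition "1 = Quat 1 0 0 0"
definition "a + b = Quat (Re a + Re b) (Im1 a + Im1 b) (Im2 a + Im2 b) (Im3 a + Im3 b)"
definition "a - b = Quat (Re a - Re b) (Im1 a - Im1 b) (Im2 a - Im2 b) (Im3 a - Im3 b)"
definition "- a = Quat (- Re a) (- Im1 a) (- Im2 a) (- Im3 a)"
definition "a * b = Quat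
   (Re a * Re b - Im1 a * Im1 b - Im2 a * Im2 b - Im3 a * Im3 b)
   (Re a * Im1 b + Im1 a * Re b + Im2 a * Im3 b - Im3 a * Im2 b)
   (Re a * Im2 b - Im1 a * Im3 b + Im2 a * Re b + Im3 a * Im1 b)
   (Re a * Im3 b + Im1 a * Im2 b - Im2 a * Im1 b + Im3 a * Re b)"
instance
  by standard (auto intro!: quat_eqI simp: zero_quat_def one_quat_def plus_quat_def
      minus_quat_def uminus_quat_def times_quat_def algebra_simps)
end

definition qcnj :: "quat \<Rightarrow> quat" where
  "qcnj q = Quat (Re q) (- Im1 q) (- Im2 q) (- Im3 q)"

definition qabs :: "quat \<Rightarrow> real" where
  "qabs q = sqrt ((Re q)\<^sup>2 + (Im1 q)\<^sup>2 + (Im2 q)\<^sup>2 + (Im3 q)\<^sup>2)"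

section \<open>n x n quaternion matrices, indices 0..n-1\<close>

type_synonym qmat = "nat \<Rightarrow> nat \<Rightarrow> quat"
type_synonym qvec = "nat \<Rightarrow> quat"

definition qmat_mult :: "nat \<Rightarrow> qmat \<Rightarrow> qmat \<Rightarrow> qmat" where
  "qmat_mult n A B = (\<lambda>i j. \<Sum>k<n. A i k * B k j)"

definition qmat_one :: "qmat" where
  "qmat_one = (\<lambda>i j. if i = j then 1 else 0)"

fun qmat_pow :: "nat \<Rightarrow> qmat \<Rightarrow> nat \<Rightarrow> qmat" where
  "qmat_pow n A 0 = qmat_one"
| "qmat_pow n A (Suc k) = qmat_mult n (qmat_pow n A k) A"

definition upper_triangular :: "nat \<Rightarrow> qmat \<Rightarrow> bool" where
  "upper_triangular n A \<longleftrightarrow> (\<forall>i<n. \<forall>j<n. j < i \<longrightarrow> A i j = 0)"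

definition nilpotent :: "nat \<Rightarrow> qmat \<Rightarrow> bool" where
  "nilpotent n A \<longleftrightarrow> (\<exists>k. \<forall>i<n. \<forall>j<n. qmat_pow n A k i j = 0)"

text \<open>Adjacency in \<open>G_A\<close> on vertices {0..n-1}; \<open>i = j\<close> gives a loop.\<close>
definition gadj :: "qmat \<Rightarrow> nat \<Rightarrow> nat \<Rightarrow> bool" where
  "gadj A i j \<longleftrightarrow> A i j \<noteq> 0 \<or> A j i \<noteq> 0"

definition graph_connected :: "nat \<Rightarrow> qmat \<Rightarrow> bool" where
  "graph_connected n A \<longleftrightarrow>
     (\<forall>i<n. \<forall>j<n. (i, j) \<in> {(u, v). u < n \<and> v < n \<and> gadj A u v}\<^sup>*)"

definition has_cycle :: "nat \<Rightarrow> qmat \<Rightarrow> bool" where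
  "has_cycle n A \<longleftrightarrow>
     (\<exists>i<n. gadj A i i) \<or>
     (\<exists>vs. length vs \<ge> 3 \<and> distinct vs \<and> set vs \<subseteq> {..<n} \<and>
        (\<forall>k. Suc k < length vs \<longrightarrow> gadj A (vs ! k) (vs ! Suc k)) \<and>
        gadj A (last vs) (hd vs))"

definition is_tree :: "nat \<Rightarrow> qmat \<Rightarrow> bool" where
  "is_tree n A \<longleftrightarrow> graph_connected n A \<and> \<not> has_cycle n A"

definition qsphere :: "nat \<Rightarrow> qvec set" where
  "qsphere n = {x. (\<Sum>i<n. qcnj (x i) * x i) = 1}"

definition num_range :: "nat \<Rightarrow> qmat \<Rightarrow> quat set" where
  "num_range n A = {(\<Sum>i<n. \<Sum>j<n. qcnj (x i) * A i j * x j) | x. x \<in> qsphere n}"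

definition qdisk :: "quat \<Rightarrow> real \<Rightarrow> quat set" where
  "qdisk c r = {q. qabs (q - c) \<le> r}"

definition pos_sphere :: "nat \<Rightarrow> (nat \<Rightarrow> real) set" where
  "pos_sphere n = {\<beta>. sqrt (\<Sum>i<n. (\<beta> i)\<^sup>2) = 1 \<and> (\<forall>i<n. \<beta> i \<ge> 0)}"

end

theory Submission
  imports Defs
begin



definition rq :: "real \<Rightarrow> quat" where "rq c = Quat c 0 0 0"

lemma qcnj_mult: "qcnj (a*b) = qcnj b * qcnj a"
  by (simp add: qcnj_def times_quat_def algebra_simps)
lemma qcnj_qcnj[simp]: "qcnj (qcnj a) = a"
  by (simp add: qcnj_def)
lemma qcnj_rq[simp]: "qcnj (rq c) = rq c"
  by (simp add: qcnj_def rq_def)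
lemma rq_comm: "rq c * q = q * rq c"
  by (simp add: rq_def times_quat_def)
lemma rq_mult: "rq a * rq b = rq (a*b)"
  by (simp add: rq_def times_quat_def)
lemma rq_add: "rq a + rq b = rq (a+b)"
  by (simp add: rq_def plus_quat_def)
lemma rq_0[simp]: "rq 0 = 0" by (simp add: rq_def zero_quat_def)
lemma rq_1[simp]: "rq 1 = 1" by (simp add: rq_def one_quat_def)
lemma rq_sum: "(\<Sum>i\<in>I. rq (f i)) = rq (\<Sum>i\<in>I. f i)"
  by (induct I rule: infinite_finite_induct) (auto simp: rq_add)
lemma rq_inj: "rq a = rq b \<Longrightarrow> a = b" by (simp add: rq_def)

lemma qabs_sq: "(qabs q)^2 = (Re q)\<^sup>2 + (Im1 q)\<^sup>2 + (Im2 q)\<^sup>2 + (Im3 q)\<^sup>2"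
  by (simp add: qabs_def)
lemma qabs_nonneg[simp]: "0 \<le> qabs q" by (simp add: qabs_def)
lemma cnj_mult_self: "qcnj q * q = rq ((qabs q)^2)"
  unfolding qabs_sq by (simp add: qcnj_def times_quat_def rq_def power2_eq_square)
lemma mult_cnj_self: "q * qcnj q = rq ((qabs q)^2)"
  unfolding qabs_sq by (simp add: qcnj_def times_quat_def rq_def power2_eq_square)
lemma qabs_mult: "qabs (a*b) = qabs a * qabs b"
  unfolding qabs_def real_sqrt_mult[symmetric]
  by (rule arg_cong[where f=sqrt]) (simp add: times_quat_def power2_eq_square algebra_simps)
lemma qabs_qcnj[simp]: "qabs (qcnj a) = qabs a"
  by (simp add: qabs_def qcnj_def)
lemma qabs_rq[simp]: "qabs (rq c) = \<bar>c\<bar>"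
  by (simp add: qabs_def rq_def)
lemma qabs_zero[simp]: "qabs 0 = 0" by (simp add: qabs_def zero_quat_def)
lemma qabs_one[simp]: "qabs 1 = 1" by (simp add: qabs_def one_quat_def)
lemma qabs_0_iff: "qabs q = 0 \<longleftrightarrow> q = 0"
  by (cases q) (simp add: qabs_def zero_quat_def add_nonneg_eq_0_iff)

definition toV :: "quat \<Rightarrow> (real \<times> real) \<times> (real \<times> real)" where
  "toV q = ((Re q, Im1 q), (Im2 q, Im3 q))"
lemma qabs_toV: "qabs q = norm (toV q)"
  by (simp add: qabs_def toV_def norm_prod_def add.assoc)
lemma toV_add: "toV (a+b) = toV a + toV b"
  by (simp add: toV_def plus_quat_def)
lemma qabs_triangle: "qabs (a+b) \<le> qabs a + qabs b"
  unfolding qabs_toV toV_add by (rule norm_triangle_ineq)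
lemma qabs_sum: "qabs (\<Sum>i\<in>I. f i) \<le> (\<Sum>i\<in>I. qabs (f i))"
proof (induct I rule: infinite_finite_induct)
  case (insert x F)
  then show ?case using qabs_triangle[of "f x" "sum f F"] by simp
qed (auto simp: qabs_def zero_quat_def)

definition qinv :: "quat \<Rightarrow> quat" where "qinv a = rq (1 / (qabs a)^2) * qcnj a"
lemma qinv_l: "a \<noteq> 0 \<Longrightarrow> qinv a * a = 1"
proof -
  assume a: "a \<noteq> 0"
  then have z: "qabs a \<noteq> 0" using qabs_0_iff by blast
  have "qinv a * a = rq (1 / (qabs a)^2) * (qcnj a * a)" unfolding qinv_def by (rule mult.assoc)
  also have "\<dots> = rq (1 / (qabs a)^2 * (qabs a)^2)" by (simp only: cnj_mult_self rq_mult)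
  also have "1 / (qabs a)^2 * (qabs a)^2 = 1" using z by simp
  finally show ?thesis by simp
qed
lemma qinv_r: "a \<noteq> 0 \<Longrightarrow> a * qinv a = 1"
proof -
  assume a: "a \<noteq> 0"
  then have z: "qabs a \<noteq> 0" using qabs_0_iff by blast
  have "a * qinv a = (a * rq (1 / (qabs a)^2)) * qcnj a" unfolding qinv_def by (rule mult.assoc[symmetric])
  also have "\<dots> = rq (1 / (qabs a)^2) * (a * qcnj a)" by (simp only: rq_comm[symmetric] mult.assoc)
  also have "\<dots> = rq (1 / (qabs a)^2 * (qabs a)^2)" by (simp only: mult_cnj_self rq_mult)
  also have "1 / (qabs a)^2 * (qabs a)^2 = 1" using z by simp
  finally show ?thesis by simp
qed
lemma qabs_qinv: "a \<noteq> 0 \<Longrightarrow> qabs (qinv a) = 1 / qabs a"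
proof -
  assume a: "a \<noteq> 0"
  then have z: "qabs a \<noteq> 0" using qabs_0_iff by blast
  have "qabs (qinv a) = 1 / (qabs a)^2 * qabs a" unfolding qinv_def qabs_mult qabs_rq qabs_qcnj by simp
  also have "\<dots> = 1 / qabs a" using z by (simp add: power2_eq_square)
  finally show ?thesis .
qed

lemma unit_cnj: "qabs u = 1 \<Longrightarrow> qcnj u * u = 1"
  by (simp add: cnj_mult_self)
lemma unit_cnj': "qabs u = 1 \<Longrightarrow> u * qcnj u = 1"
  by (simp add: mult_cnj_self)




lemma gadj_sym: "gadj A i j = gadj A j i" by (auto simp: gadj_def)

definition walk_in where
  "walk_in A S x y ws \<longleftrightarrow> ws \<noteq> [] \<and> hd ws = x \<and> last ws = y \<and> set ws \<subseteq> S \<and> successively (gadj A) ws"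

lemma walk_rev: "walk_in A S x y ws \<Longrightarrow> walk_in A S y x (rev ws)"
  unfolding walk_in_def by (auto simp: hd_rev last_rev gadj_sym)

lemma walk_join: "walk_in A S x y ws \<Longrightarrow> walk_in A S y z vs \<Longrightarrow> walk_in A S x z (ws @ tl vs)"
proof -
  assume w: "walk_in A S x y ws" and v: "walk_in A S y z vs"
  then obtain vs' where vs: "vs = y # vs'" unfolding walk_in_def by (cases vs) auto
  show ?thesis
  proof (cases "vs' = []")
    case True then show ?thesis using w v vs by (simp add: walk_in_def)
  next
    case False
    then show ?thesis using w v vs
      by (auto simp: walk_in_def successively_append_iff successively_Cons last_append)
  qed
qed

lemma walk_short:
  assumes "walk_in A S x y ws"
  shows "\<exists>ws'. walk_in A S x y ws' \<and> distinct ws'"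
proof -
  have "\<exists>w. walk_in A S x y w \<and> (\<forall>v. walk_in A S x y v \<longrightarrow> length w \<le> length v)"
    using assms by (rule ex_has_least_nat[where P="walk_in A S x y" and m=length])
  then obtain w where w: "walk_in A S x y w" and m: "\<forall>v. walk_in A S x y v \<longrightarrow> length w \<le> length v"
    by blast
  have "distinct w"
  proof (rule ccontr)
    assume "\<not> distinct w"
    then obtain xs ys zs z where wd: "w = xs @ [z] @ ys @ [z] @ zs" using not_distinct_decomp by blast
    have s: "successively (gadj A) (xs @ [z] @ ys @ [z] @ zs)" using w wd by (simp add: walk_in_def)
    have s1: "successively (gadj A) (xs @ [z])" using s successively_append_iff[of _ "xs@[z]" "ys@[z]@zs"] by simp
    have s2: "successively (gadj A) (z # zs)" using s successively_append_iff[of _ "xs@[z]@ys" "z#zs"] by simp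
    have "successively (gadj A) ((xs @ [z]) @ zs)" using s1 s2
      by (subst successively_append_iff) (auto simp: successively_Cons)
    moreover have "hd (xs @ [z] @ zs) = x" using w wd by (cases xs) (auto simp: walk_in_def)
    moreover have "last (xs @ [z] @ zs) = y" using w wd by (cases zs rule: rev_cases) (auto simp: walk_in_def)
    moreover have "set (xs @ [z] @ zs) \<subseteq> S" using w wd by (auto simp: walk_in_def)
    ultimately have "walk_in A S x y (xs @ [z] @ zs)" by (simp add: walk_in_def)
    then have "length w \<le> length (xs @ [z] @ zs)" using m by blast
    then show False using wd by simp
  qed
  with w show ?thesis by blast
qed

lemma cross_edge:
  assumes "(x, y) \<in> r\<^sup>*" "x \<in> S" "y \<notin> S"
  shows "\<exists>a b. (a, b) \<in> r \<and> a \<in> S \<and> b \<notin> S"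
  using assms by (induct rule: rtrancl_induct) auto

lemma cycle_lemma:
  assumes S: "S \<subseteq> {..<n}" and j: "j < n" "j \<notin> S" and ik: "i \<in> S" "k \<in> S" "i \<noteq> k"
    and e: "gadj A i j" "gadj A k j" and w: "walk_in A S i k ws"
  shows "has_cycle n A"
proof -
  obtain w where w: "walk_in A S i k w" and d: "distinct w" using walk_short[OF w] by blast
  obtain a lst where wl: "w = a # lst" using w by (cases w) (auto simp: walk_in_def)
  have "lst \<noteq> []" using w wl ik(3) by (auto simp: walk_in_def)
  then have l: "length w \<ge> 2" using wl by (cases lst) auto
  let ?vs = "w @ [j]"
  have "length ?vs \<ge> 3" using l by simp
  moreover have "distinct ?vs" using d w j by (auto simp: walk_in_def)
  moreover have "set ?vs \<subseteq> {..<n}" using w S j by (auto simp: walk_in_def)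
  moreover have "successively (gadj A) ?vs" using w e by (auto simp: walk_in_def successively_append_iff)
  hence "\<forall>k. Suc k < length ?vs \<longrightarrow> gadj A (?vs ! k) (?vs ! Suc k)" by (simp add: successively_conv_nth)
  moreover have "gadj A (last ?vs) (hd ?vs)" using w e by (cases w) (auto simp: walk_in_def gadj_sym)
  ultimately show ?thesis unfolding has_cycle_def by blast
qed

definition Inv where
  "Inv n A P R S u \<longleftrightarrow> S \<subseteq> {..<n} \<and> 0 \<in> S \<and> (\<forall>v\<in>S. \<exists>ws. walk_in A S 0 v ws) \<and>
     (\<forall>v\<in>S. P (u v)) \<and> (\<forall>i\<in>S. \<forall>j\<in>S. gadj A i j \<longrightarrow> R i j (u i) (u j))"

lemma tree_label:
  assumes tree: "is_tree n A" and n: "0 < n"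
    and ex0: "\<exists>a. P a"
    and ext: "\<And>i j a. i < n \<Longrightarrow> j < n \<Longrightarrow> gadj A i j \<Longrightarrow> i \<noteq> j \<Longrightarrow> P a \<Longrightarrow> \<exists>b. P b \<and> R i j a b"
    and sym: "\<And>i j a b. R i j a b \<Longrightarrow> R j i b a"
  shows "\<exists>u. (\<forall>i<n. P (u i)) \<and> (\<forall>i<n. \<forall>j<n. gadj A i j \<longrightarrow> R i j (u i) (u j))"
proof -
  have nc: "\<not> has_cycle n A" and conn: "graph_connected n A" using tree by (auto simp: is_tree_def)
  have noloop: "\<not> gadj A i i" if "i < n" for i using nc that by (auto simp: has_cycle_def)
  have main: "1 \<le> m \<Longrightarrow> m \<le> n \<Longrightarrow> \<exists>S u. card S = m \<and> Inv n A P R S u" for m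
  proof (induct m)
    case 0 then show ?case by simp
  next
    case (Suc m)
    show ?case
    proof (cases "m = 0")
      case True
      obtain a where a: "P a" using ex0 by blast
      have "card {0::nat} = Suc m" using True by simp
      moreover have "Inv n A P R {0} (\<lambda>_. a)"
        using n a noloop[of 0] by (auto simp: Inv_def walk_in_def intro!: exI[of _ "[0]"])
      ultimately show ?thesis by blast
    next
      case False
      then obtain S u where c: "card S = m" and I: "Inv n A P R S u" using Suc by auto
      have Sn: "S \<subseteq> {..<n}" and S0: "0 \<in> S"
        and SW: "\<forall>v\<in>S. \<exists>ws. walk_in A S 0 v ws" and SP: "\<forall>v\<in>S. P (u v)"
        and SR: "\<forall>i\<in>S. \<forall>j\<in>S. gadj A i j \<longrightarrow> R i j (u i) (u j)"
        using I unfolding Inv_def by blast+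
      have fS: "finite S" using Sn finite_subset by blast
      have "S \<noteq> {..<n}" using c Suc.prems by auto
      then obtain y where y: "y < n" "y \<notin> S" using Sn by auto
      have "(0, y) \<in> {(u, v). u < n \<and> v < n \<and> gadj A u v}\<^sup>*" using conn n y
        by (auto simp: graph_connected_def)
      from cross_edge[OF this, of S] I y obtain i j where
        "(i, j) \<in> {(u, v). u < n \<and> v < n \<and> gadj A u v}" "i \<in> S" "j \<notin> S" using S0 by blast
      then have ij: "i < n" "j < n" "gadj A i j" "i \<in> S" "j \<notin> S" by auto
      have "i \<noteq> j" using ij by auto
      then obtain b where b: "P b" "R i j (u i) b" using ext[of i j "u i"] ij SP by blast
      define S' where "S' = insert j S"
      define u' where "u' = u(j := b)"
      have "card S' = Suc m" using c fS ij by (simp add: S'_def)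
      moreover have "Inv n A P R S' u'"
        unfolding Inv_def
      proof (intro conjI ballI impI)
        show "S' \<subseteq> {..<n}" using Sn ij by (auto simp: S'_def)
        show "0 \<in> S'" using S0 by (simp add: S'_def)
        fix v assume v: "v \<in> S'"
        show "\<exists>ws. walk_in A S' 0 v ws"
        proof (cases "v = j")
          case True
          obtain ws where ws: "walk_in A S 0 i ws" using SW ij by blast
          have "walk_in A S' 0 j (ws @ [j])" using ws ij
            by (auto simp: walk_in_def S'_def successively_append_iff)
          then show ?thesis using True by blast
        next
          case False
          then have "v \<in> S" using v by (simp add: S'_def)
          then obtain ws where ws: "walk_in A S 0 v ws" using SW by blast
          then have "walk_in A S' 0 v ws" by (auto simp: walk_in_def S'_def)
          then show ?thesis by blast
        qed
      next
        fix v assume "v \<in> S'" then show "P (u' v)" using SP b ij(5) by (auto simp: S'_def u'_def)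
      next
        fix x z assume x: "x \<in> S'" and z: "z \<in> S'" and g: "gadj A x z"
        have other: False if kS: "k \<in> S" and kn: "k \<noteq> i" and kj: "gadj A k j" for k
        proof -
          obtain w1 where w1: "walk_in A S 0 i w1" using SW ij by blast
          obtain w2 where w2: "walk_in A S 0 k w2" using SW kS by blast
          have "walk_in A S i k (rev w1 @ tl w2)" by (rule walk_join[OF walk_rev[OF w1] w2])
          then have "has_cycle n A"
            using cycle_lemma[OF Sn ij(2) ij(5) ij(4) kS _ ij(3) kj] kn by blast
          with nc show False by simp
        qed
        show "R x z (u' x) (u' z)"
        proof (cases "x = j")
          case True
          show ?thesis
          proof (cases "z = j")
            case True with \<open>x = j\<close> g noloop ij show ?thesis by auto
          next
            case False
            then have "z \<in> S" using z by (auto simp: S'_def)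
            moreover have "gadj A z j" using g True by (simp add: gadj_sym)
            ultimately have "z = i" using other[of z] by blast
            moreover have "R j i b (u i)" using sym[OF b(2)] .
            ultimately show ?thesis using True \<open>i \<noteq> j\<close> by (simp add: u'_def)
          qed
        next
          case False
          then have xS: "x \<in> S" using x by (auto simp: S'_def)
          show ?thesis
          proof (cases "z = j")
            case True
            then have "x = i" using other[of x] g xS by blast
            then show ?thesis using True b ij by (auto simp: u'_def)
          next
            case False
            then have "z \<in> S" using z by (auto simp: S'_def)
            then show ?thesis using SR xS g \<open>x \<noteq> j\<close> False by (simp add: u'_def)
          qed
        qed
      qed
      ultimately show ?thesis by blast
    qed
  qed
  obtain S u where "card S = n" and I: "Inv n A P R S u" using main[of n] n by auto
  moreover have "S \<subseteq> {..<n}" using I unfolding Inv_def by blast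
  ultimately have "S = {..<n}" using card_subset_eq[of "{..<n}" S] by simp
  have "\<forall>v\<in>S. P (u v)" "\<forall>i\<in>S. \<forall>j\<in>S. gadj A i j \<longrightarrow> R i j (u i) (u j)"
    using I unfolding Inv_def by blast+
  then show ?thesis using \<open>S = {..<n}\<close> by (intro exI[of _ u]) simp
qed




lemma cont_coord: "continuous_on S (\<lambda>x::nat\<Rightarrow>real. x i)"
proof -
  have "continuous_on UNIV (\<lambda>x::nat\<Rightarrow>real. x i)" by (rule continuous_on_product_coordinates)
  then show ?thesis by (rule continuous_on_subset) simp
qed

definition fq :: "nat \<Rightarrow> (nat \<Rightarrow> nat \<Rightarrow> quat) \<Rightarrow> (nat \<Rightarrow> real) \<Rightarrow> real" where
  "fq n A \<beta> = (\<Sum>i<n. \<Sum>j<n. \<beta> i * \<beta> j * qabs (A i j))"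

definition KK :: "nat \<Rightarrow> (nat \<Rightarrow> real) set" where
  "KK n = Pi\<^sub>E UNIV (\<lambda>i. if i < n then {0..1} else {0}) \<inter> {\<beta>. (\<Sum>i<n. (\<beta> i)\<^sup>2) = 1}"

lemma compact_KK: "compact (KK n)"
proof -
  have "compactin (product_topology (\<lambda>i. euclidean) UNIV) (Pi\<^sub>E UNIV (\<lambda>i. if i < n then {0..1::real} else {0}))"
    unfolding compactin_PiE by (intro disjI2 ballI) simp
  then have "compact (Pi\<^sub>E UNIV (\<lambda>i. if i < n then {0..1::real} else {0}))"
    by (simp add: euclidean_product_topology)
  moreover have "closed {\<beta>::nat\<Rightarrow>real. (\<Sum>i<n. (\<beta> i)\<^sup>2) = 1}"
  proof -
    have c: "continuous_on UNIV (\<lambda>\<beta>::nat\<Rightarrow>real. \<Sum>i<n. (\<beta> i)\<^sup>2)"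
      by (intro continuous_on_sum continuous_on_power cont_coord)
    show ?thesis by (rule closed_Collect_eq[OF c continuous_on_const])
  qed
  ultimately show ?thesis unfolding KK_def by (rule compact_Int_closed)
qed

lemma KK_iff: "\<beta> \<in> KK n \<longleftrightarrow> (\<forall>i. (i < n \<longrightarrow> 0 \<le> \<beta> i \<and> \<beta> i \<le> 1) \<and> (n \<le> i \<longrightarrow> \<beta> i = 0)) \<and> (\<Sum>i<n. (\<beta> i)\<^sup>2) = 1"
proof -
  have e: "(\<beta> i \<in> (if i < n then {0..1} else {0})) \<longleftrightarrow> ((i < n \<longrightarrow> 0 \<le> \<beta> i \<and> \<beta> i \<le> 1) \<and> (n \<le> i \<longrightarrow> \<beta> i = 0))" for i
    by auto
  have p: "\<beta> \<in> Pi\<^sub>E UNIV (\<lambda>i. if i < n then {0..1} else {0}) \<longleftrightarrow> (\<forall>i. \<beta> i \<in> (if i < n then {0..1} else {0}))"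
    by (simp add: PiE_iff)
  show ?thesis unfolding KK_def Int_iff mem_Collect_eq p e by (rule refl)
qed

lemma pos_sphere_iff: "\<beta> \<in> pos_sphere n \<longleftrightarrow> (\<Sum>i<n. (\<beta> i)\<^sup>2) = 1 \<and> (\<forall>i<n. \<beta> i \<ge> 0)"
  unfolding pos_sphere_def by auto

lemma le_one_of_sphere: fixes \<beta> :: "nat \<Rightarrow> real" assumes "(\<Sum>i<n. (\<beta> i)\<^sup>2) = 1" "i < n" "0 \<le> \<beta> i" shows "\<beta> i \<le> 1"
proof -
  have h: "(\<beta> i)\<^sup>2 \<le> (\<Sum>i<n. (\<beta> i)\<^sup>2)"
    by (rule member_le_sum[where f="\<lambda>i. (\<beta> i)\<^sup>2"]) (use assms(2) in auto)
  then have "(\<beta> i)\<^sup>2 \<le> 1" using assms(1) by linarith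
  then have "\<bar>\<beta> i\<bar> \<le> 1" by (simp only: abs_square_le_1)
  then show ?thesis by (simp only: abs_le_iff)
qed

lemma KK_sub: "KK n \<subseteq> pos_sphere n"
  by (auto simp: KK_iff pos_sphere_iff)

lemma trunc_KK: assumes "\<beta> \<in> pos_sphere n" shows "(\<lambda>i. if i < n then \<beta> i else 0) \<in> KK n"
  using assms le_one_of_sphere[where n=n and \<beta>=\<beta>] by (auto simp: KK_iff pos_sphere_iff)

lemma fq_trunc: "fq n A (\<lambda>i. if i < n then \<beta> i else 0) = fq n A \<beta>"
  unfolding fq_def by (intro sum.cong refl) auto

lemma max_exists:
  assumes "0 < n"
  shows "\<exists>\<beta>s\<in>KK n. \<forall>\<beta>\<in>pos_sphere n. fq n A \<beta> \<le> fq n A \<beta>s"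
proof -
  have "(\<Sum>i<n. (if i = 0 then 1 else 0 :: real)\<^sup>2) = (\<Sum>i<n. if i = 0 then 1 else 0)"
    by (rule sum.cong) auto
  also have "\<dots> = 1" using assms by simp
  finally have ne: "(\<lambda>i. if i = 0 then 1 else 0) \<in> KK n" using assms by (auto simp: KK_iff)
  have "continuous_on (KK n) (fq n A)" unfolding fq_def
    by (intro continuous_on_sum continuous_on_mult continuous_on_const cont_coord)
  then obtain \<beta>s where b: "\<beta>s \<in> KK n" "\<forall>y\<in>KK n. fq n A y \<le> fq n A \<beta>s"
    using continuous_attains_sup[OF compact_KK, of n "fq n A"] ne by blast
  show ?thesis
  proof (intro bexI[OF _ b(1)] ballI)
    fix \<beta> assume "\<beta> \<in> pos_sphere n"
    then have "(\<lambda>i. if i < n then \<beta> i else 0) \<in> KK n" by (rule trunc_KK)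
    then have "fq n A (\<lambda>i. if i < n then \<beta> i else 0) \<le> fq n A \<beta>s" using b(2) by blast
    then show "fq n A \<beta> \<le> fq n A \<beta>s" by (simp only: fq_trunc)
  qed
qed




lemma ivt_step:
  fixes A :: "nat \<Rightarrow> nat \<Rightarrow> quat"
  assumes n: "0 < n" and bs: "\<beta>s \<in> KK n" and A0: "A 0 0 = 0" and s: "0 \<le> s" "s \<le> fq n A \<beta>s"
  shows "\<exists>\<gamma>\<in>pos_sphere n. fq n A \<gamma> = s"
proof -
  have bs0: "\<And>i. i < n \<Longrightarrow> 0 \<le> \<beta>s i" and bs1: "(\<Sum>i<n. (\<beta>s i)\<^sup>2) = 1"
    using bs by (auto simp: KK_iff)
  define e :: "nat \<Rightarrow> real" where "e i = (if i = 0 then 1 else 0)" for i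
  define v where "v t i = (1 - t) * e i + t * \<beta>s i" for t i
  define N where "N t = (\<Sum>i<n. (v t i)\<^sup>2)" for t
  define g where "g t = (\<lambda>i. v t i / sqrt (N t))" for t
  have v1: "v 1 = \<beta>s" by (auto simp: v_def)
  have N1: "N 1 = 1" using bs1 by (simp add: N_def v1)
  have vnn: "0 \<le> v t i" if "t \<in> {0..1}" "i < n" for t i
    using that bs0[of i] by (auto simp: v_def e_def)
  have Npos: "0 < N t" if t: "t \<in> {0..1}" for t
  proof (cases "t = 1")
    case True then show ?thesis using N1 by simp
  next
    case False
    then have "0 < v t 0" using t bs0[OF n] by (auto simp: v_def e_def intro: add_pos_nonneg)
    then have "0 < (v t 0)\<^sup>2" by simp
    also have "(v t 0)\<^sup>2 \<le> N t"
      unfolding N_def using member_le_sum[of 0 "{..<n}" "\<lambda>i. (v t i)^2"] n by simp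
    finally show ?thesis .
  qed
  have gsph: "g t \<in> pos_sphere n" if t: "t \<in> {0..1}" for t
  proof -
    have "(\<Sum>i<n. (g t i)\<^sup>2) = (\<Sum>i<n. (v t i)\<^sup>2 / N t)"
      using Npos[OF t] by (intro sum.cong refl) (simp add: g_def power_divide)
    also have "\<dots> = N t / N t" unfolding N_def by (rule sum_divide_distrib[symmetric])
    also have "\<dots> = 1" using Npos[OF t] by simp
    moreover have "0 \<le> N t" using Npos[OF t] by simp
    ultimately show ?thesis using vnn[OF t] by (auto simp: pos_sphere_iff g_def intro!: divide_nonneg_nonneg)
  qed
  have cont: "continuous_on {0..1} (\<lambda>t. fq n A (g t))"
  proof -
    have np: "\<forall>t\<in>{0..1}. sqrt (\<Sum>i<n. ((1 - t) * e i + t * \<beta>s i)\<^sup>2) \<noteq> 0"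
      using Npos unfolding N_def v_def by (metis less_irrefl real_sqrt_eq_zero_cancel_iff)
    show ?thesis unfolding fq_def g_def v_def N_def
      by (intro continuous_intros ballI) (use np in auto)
  qed
  have N0: "N 0 = 1"
  proof -
    have "N 0 = (\<Sum>i<n. if i = 0 then 1 else 0)" unfolding N_def v_def e_def by (intro sum.cong) auto
    then show ?thesis using n by simp
  qed
  have h0: "fq n A (g 0) = 0"
    unfolding fq_def g_def N0 by (intro sum.neutral ballI) (auto simp: v_def e_def A0)
  have h1: "fq n A (g 1) = fq n A \<beta>s"
    unfolding g_def N1 v1 by simp
  obtain t where t: "0 \<le> t" "t \<le> 1" "fq n A (g t) = s"
    using IVT'[of "\<lambda>t. fq n A (g t)" 0 s 1] s h0 h1 cont by auto
  then show ?thesis using gsph[of t] by auto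
qed

lemma rq_sandwich: "qcnj (rq g * a) * M * (rq h * b) = rq (g*h) * (qcnj a * M * b)"
proof -
  have 1: "qcnj (rq g * a) = rq g * qcnj a" by (simp only: qcnj_mult qcnj_rq rq_comm)
  have 2: "(qcnj a * M) * rq h = rq h * (qcnj a * M)" by (rule rq_comm[symmetric])
  have "qcnj (rq g * a) * M * (rq h * b) = rq g * (((qcnj a * M) * rq h) * b)"
    unfolding 1 by (simp only: mult.assoc)
  also have "\<dots> = rq g * (rq h * (qcnj a * M) * b)" by (simp only: 2)
  also have "\<dots> = (rq g * rq h) * (qcnj a * M * b)" by (simp only: mult.assoc)
  finally show ?thesis by (simp only: rq_mult)
qed

lemma label_exists:
  assumes tree: "is_tree n A" and n: "0 < n" and ut: "upper_triangular n A" and p: "qabs p = 1"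
  shows "\<exists>u. (\<forall>i<n. qabs (u i) = 1) \<and>
    (\<forall>i<n. \<forall>j<n. A i j \<noteq> 0 \<longrightarrow> qcnj (u i) * A i j * u j = rq (qabs (A i j)) * p)"
proof -
  define R where "R i j a b \<longleftrightarrow> (A i j \<noteq> 0 \<longrightarrow> qcnj a * A i j * b = rq (qabs (A i j)) * p) \<and>
      (A j i \<noteq> 0 \<longrightarrow> qcnj b * A j i * a = rq (qabs (A j i)) * p)" for i j a b
  have ex0: "\<exists>a. qabs a = 1" using qabs_rq[of 1] by (intro exI[of _ "rq 1"]) simp
  have sym: "R i j a b \<Longrightarrow> R j i b a" for i j a b by (auto simp: R_def)
  have ext: "\<exists>b. qabs b = 1 \<and> R i j a b"
    if ij: "i < n" "j < n" "gadj A i j" "i \<noteq> j" and a: "qabs a = 1" for i j a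
  proof -
    have tri: "A i j = 0 \<or> A j i = 0" using ut ij by (cases "i < j") (auto simp: upper_triangular_def)
    show ?thesis
    proof (cases "A i j = 0")
      case False
      define M where "M = A i j"
      have M: "M \<noteq> 0" "qabs M \<noteq> 0" using False qabs_0_iff by (auto simp: M_def)
      define b where "b = qinv M * a * rq (qabs M) * p"
      have "qcnj a * M * b = qcnj a * (M * qinv M) * a * rq (qabs M) * p"
        by (simp add: b_def mult.assoc)
      also have "\<dots> = (qcnj a * a) * rq (qabs M) * p" using M by (simp add: qinv_r mult.assoc)
      also have "\<dots> = rq (qabs M) * p" using a by (simp add: unit_cnj)
      finally have "qcnj a * M * b = rq (qabs M) * p" .
      moreover have "qabs b = 1" using M a p by (simp add: b_def qabs_mult qabs_qinv)
      ultimately show ?thesis using tri False by (intro exI[of _ b]) (auto simp: R_def M_def)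
    next
      case True
      then have F: "A j i \<noteq> 0" using ij(3) by (auto simp: gadj_def)
      define M where "M = A j i"
      have M: "M \<noteq> 0" "qabs M \<noteq> 0" using F qabs_0_iff by (auto simp: M_def)
      define b where "b = qcnj (rq (qabs M) * p * qcnj a * qinv M)"
      have "qcnj b * M * a = rq (qabs M) * p * qcnj a * (qinv M * M) * a"
        by (simp add: b_def mult.assoc)
      also have "\<dots> = rq (qabs M) * p * (qcnj a * a)" using M by (simp add: qinv_l mult.assoc)
      also have "\<dots> = rq (qabs M) * p" using a by (simp add: unit_cnj)
      finally have "qcnj b * M * a = rq (qabs M) * p" .
      moreover have "qabs b = 1" using M a p by (simp add: b_def qabs_mult qabs_qinv)
      ultimately show ?thesis using True by (intro exI[of _ b]) (auto simp: R_def M_def)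
    qed
  qed
  obtain u where u: "\<forall>i<n. qabs (u i) = 1" "\<forall>i<n. \<forall>j<n. gadj A i j \<longrightarrow> R i j (u i) (u j)"
    using tree_label[where P="\<lambda>a. qabs a = 1" and R=R, OF tree n ex0 ext sym] by blast
  show ?thesis
  proof (intro exI[of _ u] conjI allI impI)
    fix i j assume "i < n" "j < n" "A i j \<noteq> 0"
    then show "qcnj (u i) * A i j * u j = rq (qabs (A i j)) * p"
      using u(2) by (auto simp: R_def gadj_def)
  qed (use u in auto)
qed




theorem theorem3p5:
  fixes n :: nat and A :: "nat \<Rightarrow> nat \<Rightarrow> quat"
  assumes "n \<ge> 1"
    and "upper_triangular n A"
    and "nilpotent n A"
    and "is_tree n A"
  shows "num_range n A =
           qdisk 0 (Sup ((\<lambda>\<beta>. \<Sum>i<n. \<Sum>j<n. \<beta> i * \<beta> j * qabs (A i j)) ` pos_sphere n))"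
proof -
  have n: "0 < n" using assms(1) by simp
  have ut: "upper_triangular n A" and tree: "is_tree n A" using assms by auto
  have A0: "A 0 0 = 0"
    using tree n by (auto simp: is_tree_def has_cycle_def gadj_def)
  have F: "(\<lambda>\<beta>. \<Sum>i<n. \<Sum>j<n. \<beta> i * \<beta> j * qabs (A i j)) = fq n A"
    by (rule ext) (simp add: fq_def)
  obtain \<beta>s where bs: "\<beta>s \<in> KK n" and bmax: "\<forall>\<beta>\<in>pos_sphere n. fq n A \<beta> \<le> fq n A \<beta>s"
    using max_exists[OF n] by blast
  have bsp: "\<beta>s \<in> pos_sphere n" using bs KK_sub by blast
  have supeq: "Sup (fq n A ` pos_sphere n) = fq n A \<beta>s"
    by (rule cSup_eq_maximum) (use bsp bmax in auto)
  show ?thesis unfolding F supeq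
  proof (intro set_eqI iffI)
    fix q assume "q \<in> num_range n A"
    then obtain x where x: "x \<in> qsphere n" and q: "q = (\<Sum>i<n. \<Sum>j<n. qcnj (x i) * A i j * x j)"
      unfolding num_range_def by blast
    define \<beta> where "\<beta> i = qabs (x i)" for i
    have "rq (\<Sum>i<n. (\<beta> i)\<^sup>2) = (\<Sum>i<n. qcnj (x i) * x i)"
      by (simp add: \<beta>_def cnj_mult_self rq_sum)
    also have "\<dots> = rq 1" using x by (simp add: qsphere_def)
    finally have "(\<Sum>i<n. (\<beta> i)\<^sup>2) = 1" by (rule rq_inj)
    then have bp: "\<beta> \<in> pos_sphere n" by (simp add: pos_sphere_iff \<beta>_def)
    have "qabs q \<le> (\<Sum>i<n. qabs (\<Sum>j<n. qcnj (x i) * A i j * x j))"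
      unfolding q by (rule qabs_sum)
    also have "\<dots> \<le> (\<Sum>i<n. \<Sum>j<n. qabs (qcnj (x i) * A i j * x j))"
      by (intro sum_mono qabs_sum)
    also have "\<dots> = fq n A \<beta>"
      unfolding fq_def \<beta>_def by (intro sum.cong refl) (simp add: qabs_mult)
    also have "\<dots> \<le> fq n A \<beta>s" using bmax bp by blast
    finally show "q \<in> qdisk 0 (fq n A \<beta>s)" by (simp add: qdisk_def)
  next
    fix q assume "q \<in> qdisk 0 (fq n A \<beta>s)"
    then have qs: "qabs q \<le> fq n A \<beta>s" by (simp add: qdisk_def)
    define s where "s = qabs q"
    define p where "p = (if q = 0 then 1 else rq (1 / s) * q)"
    have p1: "qabs p = 1" using qabs_0_iff[of q] by (simp add: p_def s_def qabs_mult)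
    have qp: "q = rq s * p"
    proof (cases "q = 0")
      case True then show ?thesis by (simp add: p_def s_def qabs_def zero_quat_def)
    next
      case False
      then have "s \<noteq> 0" using qabs_0_iff by (simp add: s_def)
      then show ?thesis using False by (simp add: p_def mult.assoc[symmetric] rq_mult)
    qed
    obtain u where u1: "\<forall>i<n. qabs (u i) = 1"
      and ue: "\<forall>i<n. \<forall>j<n. A i j \<noteq> 0 \<longrightarrow> qcnj (u i) * A i j * u j = rq (qabs (A i j)) * p"
      using label_exists[OF tree n ut p1] by blast
    obtain \<gamma> where g: "\<gamma> \<in> pos_sphere n" and gs: "fq n A \<gamma> = s"
      using ivt_step[where n=n and A=A and \<beta>s=\<beta>s and s=s] n bs A0 qs by (auto simp: s_def)
    define x where "x i = rq (\<gamma> i) * u i" for i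
    have "(\<Sum>i<n. qcnj (x i) * x i) = (\<Sum>i<n. rq ((\<gamma> i)\<^sup>2))"
    proof (intro sum.cong refl)
      fix i assume i: "i \<in> {..<n}"
      have "qcnj (x i) * x i = qcnj (rq (\<gamma> i) * u i) * 1 * (rq (\<gamma> i) * u i)" by (simp add: x_def)
      also have "\<dots> = rq (\<gamma> i * \<gamma> i) * (qcnj (u i) * 1 * u i)" by (rule rq_sandwich)
      also have "\<dots> = rq ((\<gamma> i)\<^sup>2)" using u1 i by (simp add: unit_cnj power2_eq_square)
      finally show "qcnj (x i) * x i = rq ((\<gamma> i)\<^sup>2)" .
    qed
    also have "\<dots> = 1" using g by (simp add: rq_sum pos_sphere_iff)
    finally have xs: "x \<in> qsphere n" by (simp add: qsphere_def)
    have trm: "qcnj (x i) * A i j * x j = rq (\<gamma> i * \<gamma> j * qabs (A i j)) * p"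
      if ij: "i < n" "j < n" for i j
    proof -
      have "qcnj (x i) * A i j * x j = rq (\<gamma> i * \<gamma> j) * (qcnj (u i) * A i j * u j)"
        unfolding x_def by (rule rq_sandwich)
      also have "\<dots> = rq (\<gamma> i * \<gamma> j * qabs (A i j)) * p"
      proof (cases "A i j = 0")
        case True then show ?thesis by simp
      next
        case False
        then show ?thesis using ue ij by (simp add: mult.assoc[symmetric] rq_mult)
      qed
      finally show ?thesis .
    qed
    have "(\<Sum>i<n. \<Sum>j<n. qcnj (x i) * A i j * x j) = (\<Sum>i<n. \<Sum>j<n. rq (\<gamma> i * \<gamma> j * qabs (A i j)) * p)"
      using trm by (intro sum.cong refl) auto
    also have "\<dots> = rq (fq n A \<gamma>) * p"
      by (simp add: fq_def sum_distrib_right[symmetric] rq_sum)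
    also have "\<dots> = q" using gs qp by simp
    finally show "q \<in> num_range n A" using xs unfolding num_range_def by blast
  qed
qed


end
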